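(* Fix subgroups $s\neq s'$, a cohort $g\in\{1,\dots,\mathcal T\}$ and $t$ with $g\le t\le\mathcal T$, and assume all potential outcomes are integrable and $P(G=g,S=\sigma)>0$ for $\sigma\in\{s,s'\}$. Suppose (No subgroup selection) $$\mathbb E[Y_t(g;s')-Y_t(\infty;s')\mid G=g,S=s]=\mathbb E[Y_t(g;s')-Y_t(\infty;s')\mid G=g,S=s'].$$ Then $CDATT_{s-s'}(g,t)=DATT_{s-s'}(g,t)$. Consequently, if in addition the hypotheses of part (a) (resp. (b)) below hold, then $CDATT_{s-s'}(g,t)$ equals $$\mathbb E[Y_t-Y_{g-1}\mid G=g,S=s]-\mathbb E[Y_t-Y_{g-1}\mid G=g,S=s']-\Big(\mathbb E[Y_t-Y_{g-1}\mid C,S=s]-\mathbb E[Y_t-Y_{g-1}\mid C,S=s']\Big),$$ where $C$ is the event $\{G>t\}$ (resp. $\{G=\infty\}$), assumed to satisfy $P(C,S=\sigma)>0$ for $\sigma\in\{s,s'\}$. The hypotheses are: (i) for every finite cohort $g'$, every $\tau<g'$ and every $\sigma$ with $P(G=g',S=\sigma)>0$, $\mathbb E[Y_\tau(g')\mid G=g',S=\sigma]=\mathbb E[Y_\tau(\infty)\mid G=g',S=\sigma]$; and (ii) $\mathbb E[Y_t(\infty)-Y_{g-1}(\infty)\mid G=g,S=s]-\mathbb E[Y_t(\infty)-Y_{g-1}(\infty)\mid G=g,S=s']=\mathbb E[Y_t(\infty)-Y_{g-1}(\infty)\mid C,S=s]-\mathbb E[Y_t(\infty)-Y_{g-1}(\infty)\mid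 C,S=s']$.
   Context: Time periods are $t=0,1,\dots,\mathcal T$; $\mathcal S$ is a finite set of subgroups. A unit is described by a random element consisting of: $G\in\{1,\dots,\mathcal T\}\cup\{\infty\}$, the first period in which the unit is treated ($G=\infty$ means never treated; treatment is irreversible); a subgroup $S\in\mathcal S$; covariates $X$; and real potential outcomes $Y_t(g';\sigma)$ for every period $t$, every possible cohort $g'$ (including $\infty$) and every $\sigma\in\mathcal S$, interpreted as the outcome at $t$ had the unit first been treated at $g'$ and belonged to subgroup $\sigma$. Write $Y_t(g'):=Y_t(g';S)$ and the observed outcome $Y_t:=Y_t(G;S)$. Units are i.i.d. (panel data). Define $$DATT_{s-s'}(g,t):=\mathbb E[Y_t(g)-Y_t(\infty)\mid G=g,S=s]-\mathbb E[Y_t(g)-Y_t(\infty)\mid G=g,S=s'],$$ $$CDATT_{s-s'}(g,t):=\mathbb E[Y_t(g;s)-Y_t(\infty;s)\mid G=g,S=s]-\mathbb E[Y_t(g;s')-Y_t(\infty;s')\mid G=g,S=s].$$ *)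

theory Defs
  imports "HOL-Probability.Probability" "HOL-Library.Extended_Nat"
begin

text \<open>Cohorts are elements of enat: a finite cohort is enat g, never treated is infinity.
Potential outcomes: Y t g' sigma x is Y_t(g';sigma) evaluated at the outcome x.\<close>

definition ev :: "'a measure \<Rightarrow> ('a \<Rightarrow> bool) \<Rightarrow> 'a set" where
  "ev M P = {x \<in> space M. P x}"

definition cexp :: "'a measure \<Rightarrow> ('a \<Rightarrow> bool) \<Rightarrow> ('a \<Rightarrow> real) \<Rightarrow> real" where
  "cexp M P Z = (LINT x:ev M P|M. Z x) / measure M (ev M P)"

definition obsY :: "('a \<Rightarrow> enat) \<Rightarrow> ('a \<Rightarrow> 's) \<Rightarrow> (nat \<Rightarrow> enat \<Rightarrow> 's \<Rightarrow> 'a \<Rightarrow> real) \<Rightarrow> nat \<Rightarrow> 'a \<Rightarrow> real" where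
  "obsY G S Y t x = Y t (G x) (S x) x"

definition DATT :: "'a measure \<Rightarrow> ('a \<Rightarrow> enat) \<Rightarrow> ('a \<Rightarrow> 's) \<Rightarrow> (nat \<Rightarrow> enat \<Rightarrow> 's \<Rightarrow> 'a \<Rightarrow> real)
    \<Rightarrow> 's \<Rightarrow> 's \<Rightarrow> nat \<Rightarrow> nat \<Rightarrow> real" where
  "DATT M G S Y s s' g t =
     cexp M (\<lambda>x. G x = enat g \<and> S x = s) (\<lambda>x. Y t (enat g) (S x) x - Y t \<infinity> (S x) x)
   - cexp M (\<lambda>x. G x = enat g \<and> S x = s') (\<lambda>x. Y t (enat g) (S x) x - Y t \<infinity> (S x) x)"

definition CDATT :: "'a measure \<Rightarrow> ('a \<Rightarrow> enat) \<Rightarrow> ('a \<Rightarrow> 's) \<Rightarrow> (nat \<Rightarrow> enat \<Rightarrow> 's \<Rightarrow> 'a \<Rightarrow> real)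
    \<Rightarrow> 's \<Rightarrow> 's \<Rightarrow> nat \<Rightarrow> nat \<Rightarrow> real" where
  "CDATT M G S Y s s' g t =
     cexp M (\<lambda>x. G x = enat g \<and> S x = s) (\<lambda>x. Y t (enat g) s x - Y t \<infinity> s x)
   - cexp M (\<lambda>x. G x = enat g \<and> S x = s) (\<lambda>x. Y t (enat g) s' x - Y t \<infinity> s' x)"

definition DDD :: "'a measure \<Rightarrow> ('a \<Rightarrow> enat) \<Rightarrow> ('a \<Rightarrow> 's) \<Rightarrow> (nat \<Rightarrow> enat \<Rightarrow> 's \<Rightarrow> 'a \<Rightarrow> real)
    \<Rightarrow> 's \<Rightarrow> 's \<Rightarrow> nat \<Rightarrow> nat \<Rightarrow> ('a \<Rightarrow> bool) \<Rightarrow> real" where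
  "DDD M G S Y s s' g t C =
     cexp M (\<lambda>x. G x = enat g \<and> S x = s) (\<lambda>x. obsY G S Y t x - obsY G S Y (g - 1) x)
   - cexp M (\<lambda>x. G x = enat g \<and> S x = s') (\<lambda>x. obsY G S Y t x - obsY G S Y (g - 1) x)
   - (cexp M (\<lambda>x. C x \<and> S x = s) (\<lambda>x. obsY G S Y t x - obsY G S Y (g - 1) x)
      - cexp M (\<lambda>x. C x \<and> S x = s') (\<lambda>x. obsY G S Y t x - obsY G S Y (g - 1) x))"

definition hyp_i :: "'a measure \<Rightarrow> ('a \<Rightarrow> enat) \<Rightarrow> ('a \<Rightarrow> 's) \<Rightarrow> (nat \<Rightarrow> enat \<Rightarrow> 's \<Rightarrow> 'a \<Rightarrow> real)
    \<Rightarrow> nat \<Rightarrow> bool" where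
  "hyp_i M G S Y T \<longleftrightarrow>
     (\<forall>g'. 1 \<le> g' \<and> g' \<le> T \<longrightarrow> (\<forall>\<tau> < g'. \<forall>\<sigma>.
        measure M (ev M (\<lambda>x. G x = enat g' \<and> S x = \<sigma>)) > 0 \<longrightarrow>
        cexp M (\<lambda>x. G x = enat g' \<and> S x = \<sigma>) (\<lambda>x. Y \<tau> (enat g') (S x) x)
        = cexp M (\<lambda>x. G x = enat g' \<and> S x = \<sigma>) (\<lambda>x. Y \<tau> \<infinity> (S x) x)))"

definition hyp_ii :: "'a measure \<Rightarrow> ('a \<Rightarrow> enat) \<Rightarrow> ('a \<Rightarrow> 's) \<Rightarrow> (nat \<Rightarrow> enat \<Rightarrow> 's \<Rightarrow> 'a \<Rightarrow> real)
    \<Rightarrow> 's \<Rightarrow> 's \<Rightarrow> nat \<Rightarrow> nat \<Rightarrow> ('a \<Rightarrow> bool) \<Rightarrow> bool" where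
  "hyp_ii M G S Y s s' g t C \<longleftrightarrow>
     cexp M (\<lambda>x. G x = enat g \<and> S x = s) (\<lambda>x. Y t \<infinity> (S x) x - Y (g - 1) \<infinity> (S x) x)
   - cexp M (\<lambda>x. G x = enat g \<and> S x = s') (\<lambda>x. Y t \<infinity> (S x) x - Y (g - 1) \<infinity> (S x) x)
   = cexp M (\<lambda>x. C x \<and> S x = s) (\<lambda>x. Y t \<infinity> (S x) x - Y (g - 1) \<infinity> (S x) x)
   - cexp M (\<lambda>x. C x \<and> S x = s') (\<lambda>x. Y t \<infinity> (S x) x - Y (g - 1) \<infinity> (S x) x)"

end

theory Submission
  imports Defs
begin


lemma ev_sets:
  assumes "G \<in> measurable M (count_space UNIV)" "S \<in> measurable M (count_space UNIV)"
  shows "ev M (\<lambda>x. R (G x) \<and> Q (S x)) \<in> sets M"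
proof -
  have "ev M (\<lambda>x. R (G x) \<and> Q (S x)) = (G -` {y. R y} \<inter> space M) \<inter> (S -` {y. Q y} \<inter> space M)"
    unfolding ev_def by auto
  also have "\<dots> \<in> sets M" using assms by (intro sets.Int measurable_sets) auto
  finally show ?thesis .
qed

lemma cexp_cong:
  assumes "ev M P \<in> sets M" "\<forall>x\<in>space M. P x \<longrightarrow> Z x = Z' x"
  shows "cexp M P Z = cexp M P Z'"
  unfolding cexp_def using assms
  by (subst set_lebesgue_integral_cong[of _ M Z Z']) (auto simp: ev_def)

lemma cexp_diff:
  assumes "ev M P \<in> sets M" "integrable M f" "integrable M h"
  shows "cexp M P (\<lambda>x. f x - h x) = cexp M P f - cexp M P h"
proof -
  have "set_integrable M (ev M P) f" "set_integrable M (ev M P) h"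
    using integrable_mult_indicator[OF assms(1,2)] integrable_mult_indicator[OF assms(1,3)]
    unfolding set_integrable_def by simp_all
  thus ?thesis unfolding cexp_def by (simp add: diff_divide_distrib)
qed

lemma cexp_add:
  assumes "ev M P \<in> sets M" "integrable M f" "integrable M h"
  shows "cexp M P (\<lambda>x. f x + h x) = cexp M P f + cexp M P h"
proof -
  have "set_integrable M (ev M P) f" "set_integrable M (ev M P) h"
    using integrable_mult_indicator[OF assms(1,2)] integrable_mult_indicator[OF assms(1,3)]
    unfolding set_integrable_def by simp_all
  thus ?thesis unfolding cexp_def by (simp add: add_divide_distrib)
qed

lemma set_int_null:
  assumes "A \<in> sets M" "measure M A = 0" "finite_measure M"
  shows "(LINT x:A|M. (f x::real)) = 0"
proof -
  have "A \<in> null_sets M" using assms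
    by (simp add: finite_measure.emeasure_eq_measure null_sets_def)
  hence "AE x in M. x \<notin> A" by (rule AE_not_in)
  hence "(LINT x|M. indicator A x *\<^sub>R f x) = 0"
    by (intro integral_eq_zero_AE) (auto elim!: eventually_mono)
  thus ?thesis unfolding set_lebesgue_integral_def by simp
qed

lemma decomp:
  fixes F :: "'c \<Rightarrow> 'a \<Rightarrow> real"
  assumes "E \<in> sets M" "\<forall>x\<in>E. G x \<in> K" "finite K" "\<forall>c\<in>K. integrable M (F c)"
    "G \<in> measurable M (count_space UNIV)"
  shows "(LINT x:E|M. F (G x) x) = (\<Sum>c\<in>K. LINT x:(E \<inter> (G -` {c} \<inter> space M))|M. F c x)"
proof -
  have sets: "E \<inter> (G -` {c} \<inter> space M) \<in> sets M" for c
    using assms by (intro sets.Int measurable_sets) auto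
  have pw: "indicator E x *\<^sub>R F (G x) x = (\<Sum>c\<in>K. indicator (E \<inter> (G -` {c} \<inter> space M)) x *\<^sub>R F c x)"
    if "x \<in> space M" for x
  proof (cases "x \<in> E")
    case True
    hence "G x \<in> K" using assms by auto
    have "(\<Sum>c\<in>K. indicator (E \<inter> (G -` {c} \<inter> space M)) x *\<^sub>R F c x)
        = (\<Sum>c\<in>K. if c = G x then F c x else 0)"
      using True that by (intro sum.cong) (auto simp: indicator_def)
    also have "\<dots> = F (G x) x" using \<open>G x \<in> K\<close> assms(3) by (simp add: sum.delta')
    finally show ?thesis using True by simp
  next
    case False thus ?thesis by (simp add: indicator_def)
  qed
  have "(LINT x:E|M. F (G x) x) = integral\<^sup>L M (\<lambda>x. \<Sum>c\<in>K. indicator (E \<inter> (G -` {c} \<inter> space M)) x *\<^sub>R F c x)"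
    unfolding set_lebesgue_integral_def by (rule Bochner_Integration.integral_cong[OF refl], rule pw)
  also have "\<dots> = (\<Sum>c\<in>K. LINT x|M. indicator (E \<inter> (G -` {c} \<inter> space M)) x *\<^sub>R F c x)"
    using assms sets by (intro Bochner_Integration.integral_sum integrable_mult_indicator) auto
  finally show ?thesis unfolding set_lebesgue_integral_def .
qed

lemma cexp_int_eq:
  assumes "cexp M P f = cexp M P h" "measure M (ev M P) > 0"
  shows "(LINT x:ev M P|M. f x) = (LINT x:ev M P|M. h x)"
  using assms unfolding cexp_def by (simp add: divide_cancel_right)

lemma comp:
  fixes M :: "'a measure" and G :: "'a \<Rightarrow> enat" and S :: "'a \<Rightarrow> 's"
    and Y :: "nat \<Rightarrow> enat \<Rightarrow> 's \<Rightarrow> 'a \<Rightarrow> real" and K :: "enat set"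
  assumes P: "prob_space M"
    and GM: "G \<in> measurable M (count_space UNIV)"
    and SM: "S \<in> measurable M (count_space UNIV)"
    and I: "\<forall>\<tau> g' \<sigma>. integrable M (Y \<tau> g' \<sigma>)"
    and H: "hyp_i M G S Y T"
    and Eset: "ev M (\<lambda>x. C x \<and> S x = \<sigma>) \<in> sets M"
    and KG: "\<forall>x\<in>space M. C x \<longrightarrow> G x \<in> K"
    and Kfin: "finite K"
    and Kprop: "\<forall>c\<in>K. c = \<infinity> \<or> (\<exists>k. c = enat k \<and> t < k \<and> k \<le> T \<and> (\<forall>x\<in>space M. G x = c \<longrightarrow> C x))"
    and tau: "\<tau> \<le> t"
  shows "cexp M (\<lambda>x. C x \<and> S x = \<sigma>) (\<lambda>x. obsY G S Y t x - obsY G S Y \<tau> x)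
       = cexp M (\<lambda>x. C x \<and> S x = \<sigma>) (\<lambda>x. Y t \<infinity> (S x) x - Y \<tau> \<infinity> (S x) x)"
proof -
  define E where "E = ev M (\<lambda>x. C x \<and> S x = \<sigma>)"
  define F where "F = (\<lambda>c x. Y t c \<sigma> x - Y \<tau> c \<sigma> x)"
  define F' where "F' = (\<lambda>(c::enat) x. Y t \<infinity> \<sigma> x - Y \<tau> \<infinity> \<sigma> x)"
  have E: "E \<in> sets M" using Eset E_def by simp
  have FI: "\<forall>c\<in>K. integrable M (F c)" "\<forall>c\<in>K. integrable M (F' c)"
    using I unfolding F_def F'_def by auto
  have KE: "\<forall>x\<in>E. G x \<in> K" using KG unfolding E_def ev_def by auto
  have "(LINT x:E|M. obsY G S Y t x - obsY G S Y \<tau> x) = (LINT x:E|M. F (G x) x)"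
    using E by (intro set_lebesgue_integral_cong) (auto simp: E_def ev_def obsY_def F_def)
  also have "\<dots> = (\<Sum>c\<in>K. LINT x:(E \<inter> (G -` {c} \<inter> space M))|M. F c x)"
    using decomp[OF E KE Kfin FI(1) GM] .
  also have "\<dots> = (\<Sum>c\<in>K. LINT x:(E \<inter> (G -` {c} \<inter> space M))|M. F' c x)"
  proof (rule sum.cong[OF refl])
    fix c assume c: "c \<in> K"
    show "(LINT x:(E \<inter> (G -` {c} \<inter> space M))|M. F c x) = (LINT x:(E \<inter> (G -` {c} \<inter> space M))|M. F' c x)"
    proof (cases "c = \<infinity>")
      case True thus ?thesis by (simp add: F_def F'_def)
    next
      case False
      then obtain k where k: "c = enat k" "t < k" "k \<le> T" "\<forall>x\<in>space M. G x = c \<longrightarrow> C x"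
        using Kprop c by blast
      define B where "B = ev M (\<lambda>x. G x = enat k \<and> S x = \<sigma>)"
      have Bset: "B \<in> sets M" unfolding B_def using ev_sets[OF GM SM, of "\<lambda>y. y = enat k" "\<lambda>y. y = \<sigma>"] by simp
      have BE: "E \<inter> (G -` {c} \<inter> space M) = B"
        using k unfolding E_def B_def ev_def by auto
      show ?thesis
      proof (cases "measure M B > 0")
        case False
        hence "measure M B = 0" using measure_nonneg[of M B] by linarith
        thus ?thesis unfolding BE using set_int_null[OF Bset _ prob_space.finite_measure[OF P]] by simp
      next
        case True
        have h1: "cexp M (\<lambda>x. G x = enat k \<and> S x = \<sigma>) (\<lambda>x. Y t (enat k) (S x) x)
           = cexp M (\<lambda>x. G x = enat k \<and> S x = \<sigma>) (\<lambda>x. Y t \<infinity> (S x) x)"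
          and h2: "cexp M (\<lambda>x. G x = enat k \<and> S x = \<sigma>) (\<lambda>x. Y \<tau> (enat k) (S x) x)
           = cexp M (\<lambda>x. G x = enat k \<and> S x = \<sigma>) (\<lambda>x. Y \<tau> \<infinity> (S x) x)"
          using H True k tau unfolding hyp_i_def B_def by auto
        have Bs: "ev M (\<lambda>x. G x = enat k \<and> S x = \<sigma>) \<in> sets M" using Bset B_def by simp
        have c1: "cexp M (\<lambda>x. G x = enat k \<and> S x = \<sigma>) (\<lambda>x. Y r d (S x) x)
           = cexp M (\<lambda>x. G x = enat k \<and> S x = \<sigma>) (Y r d \<sigma>)" for r d
          using Bs by (intro cexp_cong) auto
        have "cexp M (\<lambda>x. G x = enat k \<and> S x = \<sigma>) (F c) = cexp M (\<lambda>x. G x = enat k \<and> S x = \<sigma>) (F' c)"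
          unfolding F_def F'_def k(1) using cexp_diff[OF Bs] I h1 h2 c1 by simp
        thus ?thesis unfolding BE B_def using cexp_int_eq True B_def by blast
      qed
    qed
  qed
  also have "\<dots> = (LINT x:E|M. F' (G x) x)"
    using decomp[OF E KE Kfin FI(2) GM] by simp
  also have "\<dots> = (LINT x:E|M. Y t \<infinity> (S x) x - Y \<tau> \<infinity> (S x) x)"
    using E by (intro set_lebesgue_integral_cong) (auto simp: E_def ev_def F'_def)
  finally show ?thesis unfolding cexp_def E_def by simp
qed

lemma treated:
  fixes M :: "'a measure" and G :: "'a \<Rightarrow> enat" and S :: "'a \<Rightarrow> 's"
    and Y :: "nat \<Rightarrow> enat \<Rightarrow> 's \<Rightarrow> 'a \<Rightarrow> real"
  assumes GM: "G \<in> measurable M (count_space UNIV)"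
    and SM: "S \<in> measurable M (count_space UNIV)"
    and I: "\<forall>\<tau> g' \<sigma>. integrable M (Y \<tau> g' \<sigma>)"
    and H: "hyp_i M G S Y T"
    and g: "1 \<le> g" "g \<le> T"
    and pos: "measure M (ev M (\<lambda>x. G x = enat g \<and> S x = \<sigma>)) > 0"
  shows "cexp M (\<lambda>x. G x = enat g \<and> S x = \<sigma>) (\<lambda>x. obsY G S Y t x - obsY G S Y (g - 1) x)
    = cexp M (\<lambda>x. G x = enat g \<and> S x = \<sigma>) (\<lambda>x. Y t (enat g) \<sigma> x - Y t \<infinity> \<sigma> x)
    + cexp M (\<lambda>x. G x = enat g \<and> S x = \<sigma>) (\<lambda>x. Y t \<infinity> (S x) x - Y (g - 1) \<infinity> (S x) x)"
proof -
  let ?A = "\<lambda>x. G x = enat g \<and> S x = \<sigma>"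
  have As: "ev M ?A \<in> sets M"
    using ev_sets[OF GM SM, of "\<lambda>y. y = enat g" "\<lambda>y. y = \<sigma>"] by simp
  have c1: "cexp M ?A (\<lambda>x. Y r d (S x) x) = cexp M ?A (Y r d \<sigma>)" for r d
    using As by (intro cexp_cong) auto
  have h: "cexp M ?A (\<lambda>x. Y (g - 1) (enat g) (S x) x) = cexp M ?A (\<lambda>x. Y (g - 1) \<infinity> (S x) x)"
    using H pos g unfolding hyp_i_def by auto
  have "cexp M ?A (\<lambda>x. obsY G S Y t x - obsY G S Y (g - 1) x)
      = cexp M ?A (\<lambda>x. Y t (enat g) \<sigma> x - Y (g - 1) (enat g) \<sigma> x)"
    using As by (intro cexp_cong) (auto simp: obsY_def)
  also have "\<dots> = cexp M ?A (Y t (enat g) \<sigma>) - cexp M ?A (Y (g - 1) (enat g) \<sigma>)"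
    using cexp_diff[OF As] I by simp
  finally have L: "cexp M ?A (\<lambda>x. obsY G S Y t x - obsY G S Y (g - 1) x)
      = cexp M ?A (Y t (enat g) \<sigma>) - cexp M ?A (Y (g - 1) (enat g) \<sigma>)" .
  have R1: "cexp M ?A (\<lambda>x. Y t (enat g) \<sigma> x - Y t \<infinity> \<sigma> x) = cexp M ?A (Y t (enat g) \<sigma>) - cexp M ?A (Y t \<infinity> \<sigma>)"
    using cexp_diff[OF As] I by simp
  have "cexp M ?A (\<lambda>x. Y t \<infinity> (S x) x - Y (g - 1) \<infinity> (S x) x) = cexp M ?A (\<lambda>x. Y t \<infinity> \<sigma> x - Y (g - 1) \<infinity> \<sigma> x)"
    using As by (intro cexp_cong) auto
  also have "\<dots> = cexp M ?A (Y t \<infinity> \<sigma>) - cexp M ?A (Y (g - 1) \<infinity> \<sigma>)"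
    using cexp_diff[OF As] I by simp
  finally have R2: "cexp M ?A (\<lambda>x. Y t \<infinity> (S x) x - Y (g - 1) \<infinity> (S x) x) = cexp M ?A (Y t \<infinity> \<sigma>) - cexp M ?A (Y (g - 1) \<infinity> \<sigma>)" .
  show ?thesis using L R1 R2 h c1[of "g - 1" "enat g"] c1[of "g - 1" \<infinity>] by simp
qed

theorem proposition2:
  fixes M :: "'a measure" and G :: "'a \<Rightarrow> enat" and S :: "'a \<Rightarrow> 's"
    and Y :: "nat \<Rightarrow> enat \<Rightarrow> 's \<Rightarrow> 'a \<Rightarrow> real"
    and \<S> :: "'s set" and T g t :: nat and s s' :: 's
  assumes "prob_space M"
    and "finite \<S>"
    and "G \<in> measurable M (count_space UNIV)"
    and "S \<in> measurable M (count_space UNIV)"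
    and "\<forall>x\<in>space M. G x = \<infinity> \<or> (\<exists>k. G x = enat k \<and> 1 \<le> k \<and> k \<le> T)"
    and "\<forall>x\<in>space M. S x \<in> \<S>"
    and "s \<in> \<S>" and "s' \<in> \<S>" and "s \<noteq> s'"
    and "1 \<le> g" and "g \<le> t" and "t \<le> T"
    and "\<forall>\<tau> g' \<sigma>. integrable M (Y \<tau> g' \<sigma>)"
    and "measure M (ev M (\<lambda>x. G x = enat g \<and> S x = s)) > 0"
    and "measure M (ev M (\<lambda>x. G x = enat g \<and> S x = s')) > 0"
    and no_selection:
      "cexp M (\<lambda>x. G x = enat g \<and> S x = s) (\<lambda>x. Y t (enat g) s' x - Y t \<infinity> s' x)
       = cexp M (\<lambda>x. G x = enat g \<and> S x = s') (\<lambda>x. Y t (enat g) s' x - Y t \<infinity> s' x)"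
  shows "CDATT M G S Y s s' g t = DATT M G S Y s s' g t
    \<and> ((measure M (ev M (\<lambda>x. G x > enat t \<and> S x = s)) > 0
         \<and> measure M (ev M (\<lambda>x. G x > enat t \<and> S x = s')) > 0
         \<and> hyp_i M G S Y T \<and> hyp_ii M G S Y s s' g t (\<lambda>x. G x > enat t))
        \<longrightarrow> CDATT M G S Y s s' g t = DDD M G S Y s s' g t (\<lambda>x. G x > enat t))
    \<and> ((measure M (ev M (\<lambda>x. G x = \<infinity> \<and> S x = s)) > 0
         \<and> measure M (ev M (\<lambda>x. G x = \<infinity> \<and> S x = s')) > 0
         \<and> hyp_i M G S Y T \<and> hyp_ii M G S Y s s' g t (\<lambda>x. G x = \<infinity>))
        \<longrightarrow> CDATT M G S Y s s' g t = DDD M G S Y s s' g t (\<lambda>x. G x = \<infinity>))"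
  proof -
  note P = assms(1) and GM = assms(3) and SM = assms(4) and rng = assms(5)
    and I = assms(13) and ps = assms(14) and ps' = assms(15)
  let ?A = "\<lambda>\<sigma> x. G x = enat g \<and> S x = \<sigma>"
  have As: "ev M (?A \<sigma>) \<in> sets M" for \<sigma>
    using ev_sets[OF GM SM, of "\<lambda>y. y = enat g" "\<lambda>y. y = \<sigma>"] by simp
  have d: "cexp M (?A \<sigma>) (\<lambda>x. Y t (enat g) (S x) x - Y t \<infinity> (S x) x)
     = cexp M (?A \<sigma>) (\<lambda>x. Y t (enat g) \<sigma> x - Y t \<infinity> \<sigma> x)" for \<sigma>
    using As by (intro cexp_cong) auto
  have p1: "CDATT M G S Y s s' g t = DATT M G S Y s s' g t"
    unfolding CDATT_def DATT_def using d[of s] d[of s'] no_selection by simp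
  have gen: "CDATT M G S Y s s' g t = DDD M G S Y s s' g t C"
    if H: "hyp_i M G S Y T" and H2: "hyp_ii M G S Y s s' g t C"
      and cs: "cexp M (\<lambda>x. C x \<and> S x = s) (\<lambda>x. obsY G S Y t x - obsY G S Y (g - 1) x)
       = cexp M (\<lambda>x. C x \<and> S x = s) (\<lambda>x. Y t \<infinity> (S x) x - Y (g - 1) \<infinity> (S x) x)"
      and cs': "cexp M (\<lambda>x. C x \<and> S x = s') (\<lambda>x. obsY G S Y t x - obsY G S Y (g - 1) x)
       = cexp M (\<lambda>x. C x \<and> S x = s') (\<lambda>x. Y t \<infinity> (S x) x - Y (g - 1) \<infinity> (S x) x)"
    for C
  proof -
    have ts: "cexp M (?A s) (\<lambda>x. obsY G S Y t x - obsY G S Y (g - 1) x)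
    = cexp M (?A s) (\<lambda>x. Y t (enat g) s x - Y t \<infinity> s x)
    + cexp M (?A s) (\<lambda>x. Y t \<infinity> (S x) x - Y (g - 1) \<infinity> (S x) x)"
      using treated[OF GM SM I H _ _ ps] assms(10,11,12) by simp
    have ts': "cexp M (?A s') (\<lambda>x. obsY G S Y t x - obsY G S Y (g - 1) x)
    = cexp M (?A s') (\<lambda>x. Y t (enat g) s' x - Y t \<infinity> s' x)
    + cexp M (?A s') (\<lambda>x. Y t \<infinity> (S x) x - Y (g - 1) \<infinity> (S x) x)"
      using treated[OF GM SM I H _ _ ps'] assms(10,11,12) by simp
    show ?thesis using p1 H2 ts ts' cs cs' d[of s] d[of s']
      unfolding DDD_def hyp_ii_def DATT_def by linarith
  qed
  have pa: "CDATT M G S Y s s' g t = DDD M G S Y s s' g t (\<lambda>x. G x > enat t)"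
    if H: "hyp_i M G S Y T" and H2: "hyp_ii M G S Y s s' g t (\<lambda>x. G x > enat t)"
  proof -
    let ?K = "insert \<infinity> (enat ` {Suc t..T})"
    have KG: "\<forall>x\<in>space M. G x > enat t \<longrightarrow> G x \<in> ?K"
    proof (intro ballI impI)
      fix x assume x: "x \<in> space M" "G x > enat t"
      show "G x \<in> ?K" using rng x by auto
    qed
    have Kp: "\<forall>c\<in>?K. c = \<infinity> \<or> (\<exists>k. c = enat k \<and> t < k \<and> k \<le> T \<and> (\<forall>x\<in>space M. G x = c \<longrightarrow> G x > enat t))"
      by auto
    have Es: "ev M (\<lambda>x. G x > enat t \<and> S x = \<sigma>) \<in> sets M" for \<sigma>
      using ev_sets[OF GM SM, of "\<lambda>y. y > enat t" "\<lambda>y. y = \<sigma>"] by simp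
    show ?thesis
      by (rule gen[OF H H2 comp[OF P GM SM I H Es KG _ Kp] comp[OF P GM SM I H Es KG _ Kp]]) (use assms(11) in auto)
  qed
  have pb: "CDATT M G S Y s s' g t = DDD M G S Y s s' g t (\<lambda>x. G x = \<infinity>)"
    if H: "hyp_i M G S Y T" and H2: "hyp_ii M G S Y s s' g t (\<lambda>x. G x = \<infinity>)"
  proof -
    have KG: "\<forall>x\<in>space M. G x = \<infinity> \<longrightarrow> G x \<in> {\<infinity>}" by auto
    have Kp: "\<forall>c\<in>{\<infinity>}. c = \<infinity> \<or> (\<exists>k. c = enat k \<and> t < k \<and> k \<le> T \<and> (\<forall>x\<in>space M. G x = c \<longrightarrow> G x = \<infinity>))"
      by auto
    have Es: "ev M (\<lambda>x. G x = \<infinity> \<and> S x = \<sigma>) \<in> sets M" for \<sigma>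
      using ev_sets[OF GM SM, of "\<lambda>y. y = \<infinity>" "\<lambda>y. y = \<sigma>"] by simp
    show ?thesis
      by (rule gen[OF H H2 comp[OF P GM SM I H Es KG _ Kp] comp[OF P GM SM I H Es KG _ Kp]]) (use assms(11) in auto)
  qed
  show ?thesis using p1 pa pb by blast
qed

end
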